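(* Suppose $s_\alpha\in R$ and $w\in W$ satisfy $\ell(s_\alpha w)=\ell(w)+1$. Then (1) $s_\alpha w>w$; and (2) if $s_i$ is a simple reflection with $s_i\neq s_\alpha$ and $s_iw>w$, then $s_is_\alpha w>s_\alpha w$.
   Context: $G$ is a complex reductive linear algebraic group, $B$ is a Borel subgroup, $T\subseteq B$ is a maximal torus, and $W=N(T)/T$ is the Weyl group, with simple reflections $S=\{s_i\}$ and reflections $R=\bigcup_{w\in W}wSw^{-1}$. $s_\alpha$ denotes the reflection associated to the positive root $\alpha$. $\ell(w)$ is the minimal length of a factorization of $w$ into simple reflections. $w\ge v$ in the Bruhat order iff $\overline{BwB/B}\supseteq BvB/B$; equivalently, some (any) reduced word for $w$ contains a subword that is a reduced word for $v$. *)

theory Defs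
  imports "HOL-Analysis.Analysis" "HOL-Library.Sublist"
begin

text \<open>The Weyl group W of (G,B,T) is the Weyl group of the (reduced, crystallographic)
root system R of (G,T), realised as a group of orthogonal transformations of a real
Euclidean space; B determines a simple system (base) Delta, whose reflections are S.\<close>

definition refl :: "'a::euclidean_space \<Rightarrow> 'a \<Rightarrow> 'a" where
  "refl \<alpha> x = x - (2 * (x \<bullet> \<alpha>) / (\<alpha> \<bullet> \<alpha>)) *\<^sub>R \<alpha>"

definition root_system :: "'a::euclidean_space set \<Rightarrow> bool" where
  "root_system R \<longleftrightarrow> finite R \<and> 0 \<notin> R
     \<and> (\<forall>\<alpha>\<in>R. refl \<alpha> ` R \<subseteq> R)
     \<and> (\<forall>\<alpha>\<in>R. \<forall>\<beta>\<in>R. 2 * (\<beta> \<bullet> \<alpha>) / (\<alpha> \<bullet> \<alpha>) \<in> \<int>)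
     \<and> (\<forall>\<alpha>\<in>R. \<forall>c::real. c *\<^sub>R \<alpha> \<in> R \<longrightarrow> c = 1 \<or> c = -1)"

definition simple_system :: "'a::euclidean_space set \<Rightarrow> 'a set \<Rightarrow> bool" where
  "simple_system R \<Delta> \<longleftrightarrow> \<Delta> \<subseteq> R \<and> independent \<Delta>
     \<and> (\<forall>\<beta>\<in>R. \<exists>c. \<beta> = (\<Sum>\<delta>\<in>\<Delta>. c \<delta> *\<^sub>R \<delta>)
                 \<and> ((\<forall>\<delta>\<in>\<Delta>. c \<delta> \<ge> 0) \<or> (\<forall>\<delta>\<in>\<Delta>. c \<delta> \<le> 0)))"

definition positive_roots :: "'a::euclidean_space set \<Rightarrow> 'a set \<Rightarrow> 'a set" where
  "positive_roots R \<Delta> = {\<beta>\<in>R. \<exists>c. \<beta> = (\<Sum>\<delta>\<in>\<Delta>. c \<delta> *\<^sub>R \<delta>) \<and> (\<forall>\<delta>\<in>\<Delta>. c \<delta> \<ge> 0)}"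

inductive_set weyl_group :: "'a::euclidean_space set \<Rightarrow> ('a \<Rightarrow> 'a) set" for R where
  weyl_id: "id \<in> weyl_group R"
| weyl_step: "\<alpha> \<in> R \<Longrightarrow> w \<in> weyl_group R \<Longrightarrow> refl \<alpha> \<circ> w \<in> weyl_group R"

definition word_prod :: "('a \<Rightarrow> 'a) list \<Rightarrow> 'a \<Rightarrow> 'a" where
  "word_prod ws = foldr (\<circ>) ws id"

definition coxeter_length :: "'a::euclidean_space set \<Rightarrow> ('a \<Rightarrow> 'a) \<Rightarrow> nat" where
  "coxeter_length \<Delta> w =
     (LEAST n. \<exists>ws. set ws \<subseteq> refl ` \<Delta> \<and> length ws = n \<and> word_prod ws = w)"

definition reduced_word :: "'a::euclidean_space set \<Rightarrow> ('a \<Rightarrow> 'a) list \<Rightarrow> ('a \<Rightarrow> 'a) \<Rightarrow> bool" where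
  "reduced_word \<Delta> ws w \<longleftrightarrow> set ws \<subseteq> refl ` \<Delta> \<and> word_prod ws = w
     \<and> length ws = coxeter_length \<Delta> w"

definition bruhat_le :: "'a::euclidean_space set \<Rightarrow> ('a \<Rightarrow> 'a) \<Rightarrow> ('a \<Rightarrow> 'a) \<Rightarrow> bool" where
  "bruhat_le \<Delta> v w \<longleftrightarrow> (\<exists>ws us. reduced_word \<Delta> ws w \<and> reduced_word \<Delta> us v \<and> subseq us ws)"

definition bruhat_lt :: "'a::euclidean_space set \<Rightarrow> ('a \<Rightarrow> 'a) \<Rightarrow> ('a \<Rightarrow> 'a) \<Rightarrow> bool" where
  "bruhat_lt \<Delta> v w \<longleftrightarrow> bruhat_le \<Delta> v w \<and> v \<noteq> w"

end

theory Submission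
  imports Defs
begin


lemma refl_inner_self: "(a::'a::euclidean_space) \<noteq> 0 \<Longrightarrow> refl a x \<bullet> a = - (x \<bullet> a)"
  by (simp add: refl_def inner_diff_left)

lemma refl_refl: "(a::'a::euclidean_space) \<noteq> 0 \<Longrightarrow> refl a (refl a x) = x"
proof -
  assume a: "a \<noteq> 0"
  have h: "refl a x \<bullet> a = - (x \<bullet> a)" using a by (rule refl_inner_self)
  have "refl a (refl a x) = refl a x - (2 * (refl a x \<bullet> a) / (a \<bullet> a)) *\<^sub>R a" by (simp only: refl_def[of a "refl a x"])
  also have "\<dots> = refl a x + (2 * (x \<bullet> a) / (a \<bullet> a)) *\<^sub>R a" by (simp only: h) simp
  also have "\<dots> = x" by (simp add: refl_def)
  finally show ?thesis .
qed

lemma refl_comp_refl: "(a::'a::euclidean_space) \<noteq> 0 \<Longrightarrow> refl a \<circ> refl a = id"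
  by (auto simp: refl_refl)

lemma refl_self_adj: "refl a x \<bullet> y = x \<bullet> refl (a::'a::euclidean_space) y"
  by (simp add: refl_def inner_diff_left inner_diff_right algebra_simps inner_commute)

lemma refl_norm: "(a::'a::euclidean_space) \<noteq> 0 \<Longrightarrow> refl a x \<bullet> refl a y = x \<bullet> y"
  by (simp add: refl_self_adj refl_refl)

lemma refl_linear: "linear (refl (a::'a::euclidean_space))"
  by (rule linearI) (simp_all add: refl_def inner_add_left algebra_simps add_divide_distrib)

lemma refl_same: "(a::'a::euclidean_space) \<noteq> 0 \<Longrightarrow> refl a a = -a"
proof -
  assume "a \<noteq> 0"
  have e: "a - 2 *\<^sub>R a = (1 - 2::real) *\<^sub>R a" by (simp only: scaleR_diff_left scaleR_one)
  show ?thesis using \<open>a \<noteq> 0\<close> by (simp add: refl_def e)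
qed

lemma refl_uminus: "refl (-a) = refl (a::'a::euclidean_space)"
  by (rule ext) (simp add: refl_def)

lemma refl_conj: 
  assumes "(a::'a::euclidean_space) \<noteq> 0" "b \<noteq> 0"
  shows "refl (refl a b) = refl a \<circ> refl b \<circ> refl a"
proof
  fix x
  let ?k = "2 * (refl a x \<bullet> b) / (b \<bullet> b)"
  have "(refl a \<circ> refl b \<circ> refl a) x = refl a (refl a x - ?k *\<^sub>R b)" by (simp add: refl_def)
  also have "\<dots> = refl a (refl a x) - ?k *\<^sub>R refl a b"
    using linear_diff[OF refl_linear] linear_scale[OF refl_linear] by metis
  also have "\<dots> = x - ?k *\<^sub>R refl a b"
    by (simp only: refl_refl[OF assms(1)])
  also have "\<dots> = refl (refl a b) x"
    using assms by (simp add: refl_def[of "refl a b"] refl_norm refl_self_adj refl_refl)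
  finally show "refl (refl a b) x = (refl a \<circ> refl b \<circ> refl a) x" by simp
qed

lemma word_prod_Nil[simp]: "word_prod [] = id" by (simp add: word_prod_def)
lemma word_prod_Cons[simp]: "word_prod (x # xs) = x \<circ> word_prod xs" by (simp add: word_prod_def)
lemma word_prod_append[simp]: "word_prod (xs @ ys) = word_prod xs \<circ> word_prod ys"
  by (induction xs) auto


lemma subseq_del: "subseq (take i xs @ drop (Suc i) xs) xs"
proof (induction xs arbitrary: i)
  case Nil then show ?case by simp
next
  case (Cons x xs) then show ?case by (cases i) auto
qed

locale rsys =
  fixes R \<Delta> :: "'a::euclidean_space set"
  assumes rs: "root_system R" and ss: "simple_system R \<Delta>"
begin

definition pos :: "'a \<Rightarrow> bool" where
  "pos x \<longleftrightarrow> (\<exists>c. x = (\<Sum>\<delta>\<in>\<Delta>. c \<delta> *\<^sub>R \<delta>) \<and> (\<forall>\<delta>\<in>\<Delta>. c \<delta> \<ge> 0))"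

lemma finR: "finite R" using rs by (simp add: root_system_def)
lemma zero_notin: "0 \<notin> R" using rs by (simp add: root_system_def)
lemma refl_R: "\<alpha> \<in> R \<Longrightarrow> \<beta> \<in> R \<Longrightarrow> refl \<alpha> \<beta> \<in> R" using rs by (auto simp: root_system_def)
lemma reduced: "\<alpha> \<in> R \<Longrightarrow> c *\<^sub>R \<alpha> \<in> R \<Longrightarrow> c = 1 \<or> c = -1" using rs by (auto simp: root_system_def)
lemma DsubR: "\<Delta> \<subseteq> R" using ss by (simp add: simple_system_def)
lemma indep: "independent \<Delta>" using ss by (simp add: simple_system_def)
lemma finD: "finite \<Delta>" using indep independent_explicit by blast
lemma nzR: "\<beta> \<in> R \<Longrightarrow> \<beta> \<noteq> 0" using zero_notin by auto
lemma nzD: "\<delta> \<in> \<Delta> \<Longrightarrow> \<delta> \<noteq> 0" using DsubR nzR by auto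

lemma lin_zero: "(\<Sum>\<gamma>\<in>\<Delta>. f \<gamma> *\<^sub>R \<gamma>) = 0 \<Longrightarrow> \<gamma> \<in> \<Delta> \<Longrightarrow> f \<gamma> = 0"
  using indep independent_explicit by blast

lemma coeff_unique:
  assumes "(\<Sum>\<gamma>\<in>\<Delta>. c \<gamma> *\<^sub>R \<gamma>) = (\<Sum>\<gamma>\<in>\<Delta>. d \<gamma> *\<^sub>R \<gamma>)" "\<gamma> \<in> \<Delta>"
  shows "c \<gamma> = d \<gamma>"
proof -
  have "(\<Sum>\<gamma>\<in>\<Delta>. (c \<gamma> - d \<gamma>) *\<^sub>R \<gamma>) = 0"
    using assms(1) by (simp add: scaleR_diff_left sum_subtractf)
  from lin_zero[OF this assms(2)] show ?thesis by simp
qed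

lemma root_pos_neg: "\<beta> \<in> R \<Longrightarrow> pos \<beta> \<or> pos (-\<beta>)"
proof -
  assume "\<beta> \<in> R"
  then obtain c where c: "\<beta> = (\<Sum>\<delta>\<in>\<Delta>. c \<delta> *\<^sub>R \<delta>)" "(\<forall>\<delta>\<in>\<Delta>. c \<delta> \<ge> 0) \<or> (\<forall>\<delta>\<in>\<Delta>. c \<delta> \<le> 0)"
    using ss unfolding simple_system_def by blast
  show ?thesis
  proof (cases "\<forall>\<delta>\<in>\<Delta>. c \<delta> \<ge> 0")
    case True then show ?thesis using c unfolding pos_def by blast
  next
    case False
    then have "\<forall>\<delta>\<in>\<Delta>. - c \<delta> \<ge> 0" using c by auto
    moreover have "-\<beta> = (\<Sum>\<delta>\<in>\<Delta>. (- c \<delta>) *\<^sub>R \<delta>)" using c by (simp add: sum_negf)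
    ultimately have "pos (-\<beta>)" unfolding pos_def by (intro exI[where x="\<lambda>\<delta>. - c \<delta>"]) simp
    then show ?thesis by blast
  qed
qed

lemma pos_not_neg: "pos \<beta> \<Longrightarrow> pos (-\<beta>) \<Longrightarrow> \<beta> = 0"
proof -
  assume "pos \<beta>" "pos (-\<beta>)"
  then obtain c d where c: "\<beta> = (\<Sum>\<delta>\<in>\<Delta>. c \<delta> *\<^sub>R \<delta>)" "\<forall>\<delta>\<in>\<Delta>. c \<delta> \<ge> 0"
    and d: "-\<beta> = (\<Sum>\<delta>\<in>\<Delta>. d \<delta> *\<^sub>R \<delta>)" "\<forall>\<delta>\<in>\<Delta>. d \<delta> \<ge> 0"
    unfolding pos_def by blast
  have "(\<Sum>\<delta>\<in>\<Delta>. (c \<delta> + d \<delta>) *\<^sub>R \<delta>) = \<beta> + - \<beta>"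
    using c d by (simp add: scaleR_add_left sum.distrib)
  then have zz: "(\<Sum>\<delta>\<in>\<Delta>. (c \<delta> + d \<delta>) *\<^sub>R \<delta>) = 0" by simp
  have "\<forall>\<delta>\<in>\<Delta>. c \<delta> + d \<delta> = 0" using lin_zero[OF zz] by blast
  then have "\<forall>\<delta>\<in>\<Delta>. c \<delta> = 0" using c d by force
  then show "\<beta> = 0" using c by simp
qed

lemma sum_delta_vec: "\<delta> \<in> \<Delta> \<Longrightarrow> (\<Sum>\<gamma>\<in>\<Delta>. (if \<gamma> = \<delta> then k else 0) *\<^sub>R \<gamma>) = k *\<^sub>R \<delta>"
proof -
  assume "\<delta> \<in> \<Delta>"
  have "(\<Sum>\<gamma>\<in>\<Delta>. (if \<gamma> = \<delta> then k else 0) *\<^sub>R \<gamma>) = (\<Sum>\<gamma>\<in>\<Delta>. (if \<gamma> = \<delta> then k *\<^sub>R \<delta> else 0))"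
    by (rule sum.cong) auto
  also have "\<dots> = k *\<^sub>R \<delta>" using \<open>\<delta> \<in> \<Delta>\<close> finD by simp
  finally show ?thesis .
qed

lemma refl_expand:
  assumes "\<delta> \<in> \<Delta>" "\<beta> = (\<Sum>\<gamma>\<in>\<Delta>. c \<gamma> *\<^sub>R \<gamma>)"
  shows "refl \<delta> \<beta> = (\<Sum>\<gamma>\<in>\<Delta>. (c \<gamma> - (if \<gamma> = \<delta> then 2 * (\<beta> \<bullet> \<delta>) / (\<delta> \<bullet> \<delta>) else 0)) *\<^sub>R \<gamma>)"
proof -
  have "(\<Sum>\<gamma>\<in>\<Delta>. (c \<gamma> - (if \<gamma> = \<delta> then 2 * (\<beta> \<bullet> \<delta>) / (\<delta> \<bullet> \<delta>) else 0)) *\<^sub>R \<gamma>)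
     = \<beta> - (\<Sum>\<gamma>\<in>\<Delta>. (if \<gamma> = \<delta> then 2 * (\<beta> \<bullet> \<delta>) / (\<delta> \<bullet> \<delta>) else 0) *\<^sub>R \<gamma>)"
    using assms(2) by (simp only: scaleR_diff_left sum_subtractf)
  also have "\<dots> = refl \<delta> \<beta>" using sum_delta_vec[OF assms(1)] by (simp add: refl_def)
  finally show ?thesis by simp
qed

lemma pos_refl:
  assumes "\<delta> \<in> \<Delta>" "\<beta> \<in> R" "pos \<beta>" "\<beta> \<noteq> \<delta>"
  shows "pos (refl \<delta> \<beta>)"
proof (rule ccontr)
  assume np: "\<not> pos (refl \<delta> \<beta>)"
  have "refl \<delta> \<beta> \<in> R" using assms DsubR refl_R by auto
  then have "pos (- refl \<delta> \<beta>)" using root_pos_neg np by blast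
  then obtain d where d: "- refl \<delta> \<beta> = (\<Sum>\<gamma>\<in>\<Delta>. d \<gamma> *\<^sub>R \<gamma>)" "\<forall>\<gamma>\<in>\<Delta>. d \<gamma> \<ge> 0"
    unfolding pos_def by blast
  obtain c where c: "\<beta> = (\<Sum>\<gamma>\<in>\<Delta>. c \<gamma> *\<^sub>R \<gamma>)" "\<forall>\<gamma>\<in>\<Delta>. c \<gamma> \<ge> 0"
    using assms(3) unfolding pos_def by blast
  define k where "k = 2 * (\<beta> \<bullet> \<delta>) / (\<delta> \<bullet> \<delta>)"
  have e: "refl \<delta> \<beta> = (\<Sum>\<gamma>\<in>\<Delta>. (c \<gamma> - (if \<gamma> = \<delta> then k else 0)) *\<^sub>R \<gamma>)"
    unfolding k_def by (rule refl_expand[OF assms(1) c(1)])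
  have "(\<Sum>\<gamma>\<in>\<Delta>. ((c \<gamma> - (if \<gamma> = \<delta> then k else 0)) + d \<gamma>) *\<^sub>R \<gamma>) = refl \<delta> \<beta> + - refl \<delta> \<beta>"
    using e d(1) by (simp only: scaleR_add_left sum.distrib)
  then have zz: "(\<Sum>\<gamma>\<in>\<Delta>. ((c \<gamma> - (if \<gamma> = \<delta> then k else 0)) + d \<gamma>) *\<^sub>R \<gamma>) = 0" by simp
  have z: "\<forall>\<gamma>\<in>\<Delta>. (c \<gamma> - (if \<gamma> = \<delta> then k else 0)) + d \<gamma> = 0" using lin_zero[OF zz] by blast
  have cz: "\<forall>\<gamma>\<in>\<Delta>. \<gamma> \<noteq> \<delta> \<longrightarrow> c \<gamma> = 0"
  proof (intro ballI impI)
    fix \<gamma> assume "\<gamma> \<in> \<Delta>" "\<gamma> \<noteq> \<delta>"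
    then show "c \<gamma> = 0" using z c(2) d(2) by force
  qed
  have "\<beta> = (\<Sum>\<gamma>\<in>\<Delta>. (if \<gamma> = \<delta> then c \<delta> else 0) *\<^sub>R \<gamma>)"
    unfolding c(1) by (rule sum.cong) (use cz in auto)
  then have b: "\<beta> = c \<delta> *\<^sub>R \<delta>" using sum_delta_vec[OF assms(1)] by simp
  have "c \<delta> = 1 \<or> c \<delta> = -1" using reduced[of \<delta> "c \<delta>"] b assms DsubR by auto
  then have "c \<delta> = 1" using c(2) assms(1) by force
  then show False using b assms(4) by simp
qed


abbreviation S where "S \<equiv> refl ` \<Delta>"

lemma S_inv: "s \<in> S \<Longrightarrow> s \<circ> s = id"
  using nzD refl_comp_refl by auto

lemma word_inv: "set ws \<subseteq> S \<Longrightarrow> word_prod (rev ws) \<circ> word_prod ws = id"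
proof (induction ws)
  case Nil then show ?case by simp
next
  case (Cons s ws)
  have "word_prod (rev (s # ws)) \<circ> word_prod (s # ws) = word_prod (rev ws) \<circ> (s \<circ> s) \<circ> word_prod ws"
    by (simp add: o_assoc)
  also have "\<dots> = word_prod (rev ws) \<circ> word_prod ws" using Cons.prems S_inv by simp
  also have "\<dots> = id" by (rule Cons.IH) (use Cons.prems in simp)
  finally show ?case .
qed

lemma word_inv': "set ws \<subseteq> S \<Longrightarrow> word_prod ws \<circ> word_prod (rev ws) = id"
  using word_inv[of "rev ws"] by simp

lemma word_linear: "set ws \<subseteq> S \<Longrightarrow> linear (word_prod ws)"
proof (induction ws)
  case Nil then show ?case using linear_id by (simp add: id_def)
next
  case (Cons s ws)
  then obtain \<delta> where "s = refl \<delta>" by auto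
  moreover have "linear (word_prod ws)" by (rule Cons.IH) (use Cons.prems in simp)
  ultimately show ?case using linear_compose[OF \<open>linear (word_prod ws)\<close> refl_linear[of \<delta>]] by (simp only: word_prod_Cons)
qed

lemma word_R: "set ws \<subseteq> S \<Longrightarrow> \<beta> \<in> R \<Longrightarrow> word_prod ws \<beta> \<in> R"
proof (induction ws)
  case Nil then show ?case by simp
next
  case (Cons s ws)
  then show ?case using refl_R DsubR by auto
qed

lemma word_neg: "set ws \<subseteq> S \<Longrightarrow> word_prod ws (-x) = - word_prod ws x"
  using word_linear linear_neg by blast

lemma word_nz: "set ws \<subseteq> S \<Longrightarrow> \<beta> \<noteq> 0 \<Longrightarrow> word_prod ws \<beta> \<noteq> 0"
proof
  assume "set ws \<subseteq> S" "\<beta> \<noteq> 0" "word_prod ws \<beta> = 0"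
  then have "word_prod (rev ws) (word_prod ws \<beta>) = 0"
    using word_linear[of "rev ws"] linear_0 by simp
  then show False using word_inv[of ws] \<open>set ws \<subseteq> S\<close> \<open>\<beta> \<noteq> 0\<close> by (metis comp_apply id_apply)
qed

lemma refl_word: "set ws \<subseteq> S \<Longrightarrow> \<beta> \<noteq> 0 \<Longrightarrow>
   refl (word_prod ws \<beta>) = word_prod ws \<circ> refl \<beta> \<circ> word_prod (rev ws)"
proof (induction ws)
  case Nil then show ?case by simp
next
  case (Cons s ws)
  then obtain \<delta> where \<delta>: "\<delta> \<in> \<Delta>" "s = refl \<delta>" by auto
  have nz: "word_prod ws \<beta> \<noteq> 0" using word_nz Cons by auto
  have ih: "refl (word_prod ws \<beta>) = word_prod ws \<circ> refl \<beta> \<circ> word_prod (rev ws)"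
    by (rule Cons.IH) (use Cons.prems in auto)
  have "refl (word_prod (s # ws) \<beta>) = refl (refl \<delta> (word_prod ws \<beta>))" using \<delta> by simp
  also have "\<dots> = s \<circ> refl (word_prod ws \<beta>) \<circ> s" using refl_conj[OF nzD[OF \<delta>(1)] nz] \<delta> by simp
  also have "s \<circ> refl (word_prod ws \<beta>) \<circ> s = s \<circ> (word_prod ws \<circ> refl \<beta> \<circ> word_prod (rev ws)) \<circ> s" by (simp only: ih)
  also have "\<dots> = word_prod (s # ws) \<circ> refl \<beta> \<circ> word_prod (rev (s # ws))" by (simp add: o_assoc)
  finally show ?case .
qed

definition coef :: "'a \<Rightarrow> 'a \<Rightarrow> real" where
  "coef \<beta> = (SOME c. \<beta> = (\<Sum>\<gamma>\<in>\<Delta>. c \<gamma> *\<^sub>R \<gamma>))"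
definition ht :: "'a \<Rightarrow> real" where
  "ht \<beta> = (\<Sum>\<gamma>\<in>\<Delta>. coef \<beta> \<gamma>)"

lemma ht_eq: "\<beta> = (\<Sum>\<gamma>\<in>\<Delta>. c \<gamma> *\<^sub>R \<gamma>) \<Longrightarrow> ht \<beta> = (\<Sum>\<gamma>\<in>\<Delta>. c \<gamma>)"
proof -
  assume b: "\<beta> = (\<Sum>\<gamma>\<in>\<Delta>. c \<gamma> *\<^sub>R \<gamma>)"
  then have "\<exists>c. \<beta> = (\<Sum>\<gamma>\<in>\<Delta>. c \<gamma> *\<^sub>R \<gamma>)" by blast
  then have "\<beta> = (\<Sum>\<gamma>\<in>\<Delta>. coef \<beta> \<gamma> *\<^sub>R \<gamma>)" unfolding coef_def by (rule someI_ex)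
  then have "(\<Sum>\<gamma>\<in>\<Delta>. coef \<beta> \<gamma> *\<^sub>R \<gamma>) = (\<Sum>\<gamma>\<in>\<Delta>. c \<gamma> *\<^sub>R \<gamma>)" using b by simp
  then have "\<forall>\<gamma>\<in>\<Delta>. coef \<beta> \<gamma> = c \<gamma>" using coeff_unique by blast
  then show ?thesis unfolding ht_def by simp
qed

lemma pos_root_conj_aux:
  "\<forall>\<beta>. \<beta> \<in> R \<and> pos \<beta> \<and> card {\<gamma>\<in>R. ht \<gamma> < ht \<beta>} = n \<longrightarrow>
     (\<exists>ws \<delta>. set ws \<subseteq> S \<and> \<delta> \<in> \<Delta> \<and> \<beta> = word_prod ws \<delta>)"
proof (induction n rule: less_induct)
  case (less n)
  show ?case
  proof (intro allI impI)
    fix \<beta> assume a: "\<beta> \<in> R \<and> pos \<beta> \<and> card {\<gamma>\<in>R. ht \<gamma> < ht \<beta>} = n"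
    then obtain c where c: "\<beta> = (\<Sum>\<gamma>\<in>\<Delta>. c \<gamma> *\<^sub>R \<gamma>)" "\<forall>\<gamma>\<in>\<Delta>. c \<gamma> \<ge> 0"
      unfolding pos_def by blast
    show "\<exists>ws \<delta>. set ws \<subseteq> S \<and> \<delta> \<in> \<Delta> \<and> \<beta> = word_prod ws \<delta>"
    proof (cases "\<beta> \<in> \<Delta>")
      case True
      then show ?thesis by (intro exI[of _ "[]"] exI[of _ \<beta>]) simp
    next
      case False
      have bnz: "\<beta> \<noteq> 0" using a nzR by auto
      have "0 < \<beta> \<bullet> \<beta>" using bnz by simp
      also have "\<beta> \<bullet> \<beta> = (\<Sum>\<gamma>\<in>\<Delta>. c \<gamma> * (\<gamma> \<bullet> \<beta>))"
        by (subst (1) c(1)) (simp add: inner_sum_left)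
      finally have "0 < (\<Sum>\<gamma>\<in>\<Delta>. c \<gamma> * (\<gamma> \<bullet> \<beta>))" .
      have "\<exists>\<delta>\<in>\<Delta>. 0 < c \<delta> * (\<delta> \<bullet> \<beta>)"
      proof (rule ccontr)
        assume "\<not> (\<exists>\<delta>\<in>\<Delta>. 0 < c \<delta> * (\<delta> \<bullet> \<beta>))"
        then have "\<forall>\<gamma>\<in>\<Delta>. c \<gamma> * (\<gamma> \<bullet> \<beta>) \<le> 0" by (simp add: not_less)
        then have "(\<Sum>\<gamma>\<in>\<Delta>. c \<gamma> * (\<gamma> \<bullet> \<beta>)) \<le> 0" by (intro sum_nonpos) blast
        then show False using \<open>0 < (\<Sum>\<gamma>\<in>\<Delta>. c \<gamma> * (\<gamma> \<bullet> \<beta>))\<close> by simp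
      qed
      then obtain \<delta> where \<delta>: "\<delta> \<in> \<Delta>" "0 < c \<delta> * (\<delta> \<bullet> \<beta>)" by blast
      have dpos: "0 < \<delta> \<bullet> \<beta>"
      proof (rule ccontr)
        assume "\<not> 0 < \<delta> \<bullet> \<beta>"
        then have "c \<delta> * (\<delta> \<bullet> \<beta>) \<le> 0" using c(2) \<delta>(1) by (intro mult_nonneg_nonpos) auto
        then show False using \<delta>(2) by simp
      qed
      have ddpos: "0 < \<delta> \<bullet> \<delta>" using nzD[OF \<delta>(1)] by simp
      define k where "k = 2 * (\<beta> \<bullet> \<delta>) / (\<delta> \<bullet> \<delta>)"
      have kpos: "0 < k" unfolding k_def using dpos ddpos by (simp add: inner_commute)
      define \<beta>' where "\<beta>' = refl \<delta> \<beta>"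
      have b'R: "\<beta>' \<in> R" unfolding \<beta>'_def using a \<delta> DsubR refl_R by auto
      have b'pos: "pos \<beta>'" unfolding \<beta>'_def by (rule pos_refl[OF \<delta>(1)]) (use a False \<delta>(1) in auto)
      have e: "\<beta>' = (\<Sum>\<gamma>\<in>\<Delta>. (c \<gamma> - (if \<gamma> = \<delta> then k else 0)) *\<^sub>R \<gamma>)"
        unfolding \<beta>'_def k_def by (rule refl_expand[OF \<delta>(1) c(1)])
      have "ht \<beta>' = (\<Sum>\<gamma>\<in>\<Delta>. (c \<gamma> - (if \<gamma> = \<delta> then k else 0)))" using ht_eq[OF e] .
      also have "\<dots> = (\<Sum>\<gamma>\<in>\<Delta>. c \<gamma>) - k" using \<delta>(1) finD by (simp add: sum_subtractf)
      also have "(\<Sum>\<gamma>\<in>\<Delta>. c \<gamma>) = ht \<beta>" using ht_eq[OF c(1)] by simp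
      finally have hlt: "ht \<beta>' < ht \<beta>" using kpos by simp
      have ps: "{\<gamma>\<in>R. ht \<gamma> < ht \<beta>'} \<subset> {\<gamma>\<in>R. ht \<gamma> < ht \<beta>}"
        using hlt b'R by auto
      have fin: "finite {\<gamma>\<in>R. ht \<gamma> < ht \<beta>}" using finR by simp
      have "card {\<gamma>\<in>R. ht \<gamma> < ht \<beta>'} < card {\<gamma>\<in>R. ht \<gamma> < ht \<beta>}"
        by (rule psubset_card_mono[OF fin ps])
      then have "card {\<gamma>\<in>R. ht \<gamma> < ht \<beta>'} < n" using a by simp
      from less.IH[OF this, rule_format, of \<beta>'] obtain ws \<delta>' where ws: "set ws \<subseteq> S" "\<delta>' \<in> \<Delta>" "\<beta>' = word_prod ws \<delta>'"
        using b'R b'pos by blast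
      have "\<beta> = refl \<delta> \<beta>'" unfolding \<beta>'_def using refl_refl[OF nzD[OF \<delta>(1)]] by simp
      then have "\<beta> = word_prod (refl \<delta> # ws) \<delta>'" using ws by simp
      then show ?thesis using ws \<delta>(1) by (intro exI[of _ "refl \<delta> # ws"] exI[of _ \<delta>']) auto
    qed
  qed
qed

lemma pos_root_conj: "\<beta> \<in> R \<Longrightarrow> pos \<beta> \<Longrightarrow> \<exists>ws \<delta>. set ws \<subseteq> S \<and> \<delta> \<in> \<Delta> \<and> \<beta> = word_prod ws \<delta>"
  using pos_root_conj_aux by blast

lemma refl_has_word: "\<beta> \<in> R \<Longrightarrow> \<exists>ws. set ws \<subseteq> S \<and> word_prod ws = refl \<beta>"
proof -
  assume bR: "\<beta> \<in> R"
  have mR: "-\<beta> \<in> R" using refl_R[OF bR bR] refl_same[OF nzR[OF bR]] by simp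
  obtain \<beta>' where b': "\<beta>' \<in> R" "pos \<beta>'" "refl \<beta>' = refl \<beta>"
  proof (cases "pos \<beta>")
    case True then show ?thesis using that bR by blast
  next
    case False then have "pos (-\<beta>)" using root_pos_neg[OF bR] by blast
    then show ?thesis using that mR refl_uminus by blast
  qed
  then obtain ws \<delta> where w: "set ws \<subseteq> S" "\<delta> \<in> \<Delta>" "\<beta>' = word_prod ws \<delta>"
    using pos_root_conj by blast
  have "refl \<beta> = word_prod ws \<circ> refl \<delta> \<circ> word_prod (rev ws)"
    using b'(3) w refl_word[OF w(1) nzD[OF w(2)]] by simp
  also have "\<dots> = word_prod (ws @ [refl \<delta>] @ rev ws)" by (simp add: o_assoc)
  finally show ?thesis using w by (intro exI[of _ "ws @ [refl \<delta>] @ rev ws"]) auto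
qed

lemma weyl_word: "w \<in> weyl_group R \<Longrightarrow> \<exists>ws. set ws \<subseteq> S \<and> word_prod ws = w"
proof (induction rule: weyl_group.induct)
  case weyl_id
  then show ?case by (intro exI[of _ "[]"]) simp
next
  case (weyl_step \<alpha> w)
  then obtain ws vs where "set ws \<subseteq> S" "word_prod ws = w" "set vs \<subseteq> S" "word_prod vs = refl \<alpha>"
    using refl_has_word by blast
  then show ?case by (intro exI[of _ "vs @ ws"]) auto
qed


lemma len_le: "set ws \<subseteq> S \<Longrightarrow> coxeter_length \<Delta> (word_prod ws) \<le> length ws"
  unfolding coxeter_length_def by (rule Least_le) blast

lemma has_red: "set ws \<subseteq> S \<Longrightarrow> word_prod ws = w \<Longrightarrow> \<exists>vs. reduced_word \<Delta> vs w"
proof -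
  assume a: "set ws \<subseteq> S" "word_prod ws = w"
  let ?P = "\<lambda>n. \<exists>vs. set vs \<subseteq> S \<and> length vs = n \<and> word_prod vs = w"
  have "?P (length ws)" using a by blast
  then have "?P (LEAST n. ?P n)" by (rule LeastI)
  then show ?thesis unfolding reduced_word_def coxeter_length_def by blast
qed

lemma deletion:
  "set ws \<subseteq> S \<Longrightarrow> \<beta> \<in> R \<Longrightarrow> pos \<beta> \<Longrightarrow> pos (- (word_prod (rev ws) \<beta>)) \<Longrightarrow>
   \<exists>i<length ws. refl \<beta> \<circ> word_prod ws = word_prod (take i ws @ drop (Suc i) ws)"
proof (induction ws arbitrary: \<beta>)
  case Nil
  then have "\<beta> = 0" using pos_not_neg by simp
  then show ?case using Nil nzR by blast
next
  case (Cons s ws)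
  then obtain \<delta> where \<delta>: "\<delta> \<in> \<Delta>" "s = refl \<delta>" by auto
  have dnz: "\<delta> \<noteq> 0" using nzD[OF \<delta>(1)] .
  have bnz: "\<beta> \<noteq> 0" using nzR Cons.prems by blast
  show ?case
  proof (cases "\<beta> = \<delta>")
    case True
    have "refl \<beta> \<circ> word_prod (s # ws) = word_prod (take 0 (s # ws) @ drop (Suc 0) (s # ws))"
      using True \<delta> dnz by (simp add: fun_eq_iff refl_refl)
    then show ?thesis by blast
  next
    case False
    have sR: "s \<beta> \<in> R" using \<delta> Cons.prems DsubR refl_R by auto
    have sp: "pos (s \<beta>)" using \<delta> pos_refl Cons.prems False by auto
    have "pos (- (word_prod (rev ws) (s \<beta>)))" using Cons.prems by simp
    then have "\<exists>i<length ws. refl (s \<beta>) \<circ> word_prod ws = word_prod (take i ws @ drop (Suc i) ws)"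
      by (intro Cons.IH sR sp) (use Cons.prems in auto)
    then obtain i where i: "i < length ws" "refl (s \<beta>) \<circ> word_prod ws = word_prod (take i ws @ drop (Suc i) ws)"
      by blast
    have h: "refl \<delta> (refl \<beta> (refl \<delta> (word_prod ws x))) = word_prod (take i ws @ drop (Suc i) ws) x" for x
      using i(2) refl_conj[OF dnz bnz] \<delta>(2) by (simp add: fun_eq_iff)
    have "refl \<beta> \<circ> word_prod (s # ws) = word_prod (take (Suc i) (s # ws) @ drop (Suc (Suc i)) (s # ws))"
    proof
      fix x
      have "(refl \<beta> \<circ> word_prod (s # ws)) x = refl \<delta> (refl \<delta> (refl \<beta> (refl \<delta> (word_prod ws x))))"
        using \<delta>(2) dnz by (simp add: refl_refl)
      also have "\<dots> = refl \<delta> (word_prod (take i ws @ drop (Suc i) ws) x)" using h by simp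
      also have "\<dots> = word_prod (take (Suc i) (s # ws) @ drop (Suc (Suc i)) (s # ws)) x"
        using \<delta>(2) by simp
      finally show "(refl \<beta> \<circ> word_prod (s # ws)) x = word_prod (take (Suc i) (s # ws) @ drop (Suc (Suc i)) (s # ws)) x" .
    qed
    moreover have "Suc i < length (s # ws)" using i(1) by simp
    ultimately show ?thesis by blast
  qed
qed

lemma KS2:
  assumes "set xs \<subseteq> S" "\<beta> \<in> R" "pos \<beta>" "pos (- (word_prod (rev xs) \<beta>))"
  shows "\<exists>us. set us \<subseteq> S \<and> word_prod us = refl \<beta> \<circ> word_prod xs \<and> subseq us xs \<and> Suc (length us) = length xs"
proof -
  obtain i where i: "i < length xs" "refl \<beta> \<circ> word_prod xs = word_prod (take i xs @ drop (Suc i) xs)"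
    using deletion[OF assms] by blast
  have "set (take i xs @ drop (Suc i) xs) \<subseteq> S"
    using assms(1) set_take_subset[of i xs] set_drop_subset[of "Suc i" xs] by auto
  moreover have "Suc (length (take i xs @ drop (Suc i) xs)) = length xs" using i(1) by simp
  ultimately show ?thesis using i(2) subseq_del by metis
qed

lemma inv_eq:
  assumes "set ws \<subseteq> S" "set vs \<subseteq> S" "word_prod ws = refl \<beta> \<circ> word_prod vs" "\<beta> \<noteq> 0"
  shows "word_prod (rev ws) \<beta> = - word_prod (rev vs) \<beta>"
proof -
  have a: "word_prod (rev ws) (word_prod ws x) = x" for x using word_inv[OF assms(1)] by (simp add: fun_eq_iff)
  have b: "word_prod vs (word_prod (rev vs) x) = x" for x using word_inv'[OF assms(2)] by (simp add: fun_eq_iff)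
  have "word_prod ws (word_prod (rev vs) \<beta>) = -\<beta>" using assms(3) b refl_same[OF assms(4)] by simp
  then have "word_prod (rev ws) (-\<beta>) = word_prod (rev vs) \<beta>" using a by metis
  then have "- word_prod (rev ws) \<beta> = word_prod (rev vs) \<beta>" using word_neg[of "rev ws"] assms(1) by simp
  then show ?thesis by (metis minus_minus)
qed

lemma KS:
  assumes "set xs \<subseteq> S" "set ys \<subseteq> S" "word_prod xs = refl \<beta> \<circ> word_prod ys" "\<beta> \<in> R" "pos \<beta>"
    "pos (word_prod (rev ys) \<beta>)"
  shows "\<exists>us. set us \<subseteq> S \<and> word_prod us = word_prod ys \<and> subseq us xs \<and> Suc (length us) = length xs"
proof -
  have bnz: "\<beta> \<noteq> 0" using nzR assms(4) by blast
  have "pos (- (word_prod (rev xs) \<beta>))" using inv_eq[OF assms(1,2,3) bnz] assms(6) by simp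
  from KS2[OF assms(1,4,5) this] obtain us where
    "set us \<subseteq> S" "word_prod us = refl \<beta> \<circ> word_prod xs" "subseq us xs" "Suc (length us) = length xs" by blast
  moreover have "refl \<beta> \<circ> word_prod xs = word_prod ys" using assms(3) refl_refl[OF bnz] by (simp add: fun_eq_iff)
  ultimately show ?thesis by metis
qed

lemma dichot: "set ys \<subseteq> S \<Longrightarrow> \<beta> \<in> R \<Longrightarrow> pos (word_prod (rev ys) \<beta>) \<or> pos (- word_prod (rev ys) \<beta>)"
  using root_pos_neg word_R[of "rev ys"] by simp

lemma bruhat_le_len: "bruhat_le \<Delta> v w \<Longrightarrow> coxeter_length \<Delta> v \<le> coxeter_length \<Delta> w"
  unfolding bruhat_le_def reduced_word_def using list_emb_length by metis

lemma P1:
  assumes "reduced_word \<Delta> vs v" "v = refl \<beta> \<circ> w" "set ws0 \<subseteq> S" "word_prod ws0 = w"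
    "\<beta> \<in> R" "pos \<beta>" "coxeter_length \<Delta> v = coxeter_length \<Delta> w + 1"
  shows "pos (- word_prod (rev vs) \<beta>)"
proof (rule ccontr)
  assume na: "\<not> pos (- word_prod (rev vs) \<beta>)"
  have vs: "set vs \<subseteq> S" "word_prod vs = v" "length vs = coxeter_length \<Delta> v"
    using assms(1) unfolding reduced_word_def by auto
  then have p: "pos (word_prod (rev vs) \<beta>)" using dichot assms(5) na by blast
  obtain ws where ws: "reduced_word \<Delta> ws w" using has_red assms(3,4) by blast
  have ws': "set ws \<subseteq> S" "word_prod ws = w" "length ws = coxeter_length \<Delta> w"
    using ws unfolding reduced_word_def by auto
  have bnz: "\<beta> \<noteq> 0" using nzR assms(5) by blast
  have "word_prod ws = refl \<beta> \<circ> word_prod vs"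
    using ws'(2) vs(2) assms(2) refl_refl[OF bnz] by (auto simp: fun_eq_iff)
  from KS[OF ws'(1) vs(1) this assms(5,6) p] obtain us where
    us: "set us \<subseteq> S" "word_prod us = v" "Suc (length us) = length ws" using vs(2) by metis
  have "coxeter_length \<Delta> v \<le> length us" using len_le[OF us(1)] us(2) by simp
  then show False using us(3) ws'(3) assms(7) by simp
qed


lemma main:
  assumes "\<alpha> \<in> positive_roots R \<Delta>" "w \<in> weyl_group R"
    and len: "coxeter_length \<Delta> (refl \<alpha> \<circ> w) = coxeter_length \<Delta> w + 1"
  shows "bruhat_lt \<Delta> w (refl \<alpha> \<circ> w)
    \<and> (\<forall>\<delta>\<in>\<Delta>. refl \<delta> \<noteq> refl \<alpha> \<and> bruhat_lt \<Delta> w (refl \<delta> \<circ> w)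
          \<longrightarrow> bruhat_lt \<Delta> (refl \<alpha> \<circ> w) (refl \<delta> \<circ> (refl \<alpha> \<circ> w)))"
proof -
  have aR: "\<alpha> \<in> R" and ap: "pos \<alpha>" using assms(1) unfolding positive_roots_def pos_def by auto
  have anz: "\<alpha> \<noteq> 0" using nzR aR by blast
  obtain ws0 where ws0: "set ws0 \<subseteq> S" "word_prod ws0 = w" using weyl_word[OF assms(2)] by blast
  obtain ws where ws: "reduced_word \<Delta> ws w" using has_red ws0 by blast
  have ws': "set ws \<subseteq> S" "word_prod ws = w" "length ws = coxeter_length \<Delta> w"
    using ws unfolding reduced_word_def by auto
  obtain ts where ts: "set ts \<subseteq> S" "word_prod ts = refl \<alpha>" using refl_has_word[OF aR] by blast
  define v where "v = refl \<alpha> \<circ> w"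
  have "set (ts @ ws0) \<subseteq> S" "word_prod (ts @ ws0) = v" using ts ws0 by (auto simp: v_def)
  then obtain vs where vs: "reduced_word \<Delta> vs v" using has_red by blast
  have vs': "set vs \<subseteq> S" "word_prod vs = v" "length vs = coxeter_length \<Delta> v"
    using vs unfolding reduced_word_def by auto
  have lenv: "coxeter_length \<Delta> v = coxeter_length \<Delta> w + 1" using len by (simp add: v_def)
  have wv: "refl \<alpha> \<circ> v = w" using refl_refl[OF anz] by (simp add: v_def fun_eq_iff)
  have vinv: "v (word_prod (rev vs) x) = x" for x
    using word_inv'[OF vs'(1)] vs'(2) by (simp add: fun_eq_iff)
  have n1: "pos (- word_prod (rev vs) \<alpha>)" using P1[OF vs v_def ws0 aR ap lenv] .
  obtain us where us: "set us \<subseteq> S" "word_prod us = refl \<alpha> \<circ> word_prod vs" "subseq us vs"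
      "Suc (length us) = length vs" using KS2[OF vs'(1) aR ap n1] by blast
  have "reduced_word \<Delta> us w" unfolding reduced_word_def using us vs' wv lenv by simp
  then have "bruhat_le \<Delta> w v" unfolding bruhat_le_def using vs us(3) by blast
  moreover have "w \<noteq> v" using lenv by auto
  ultimately have part1: "bruhat_lt \<Delta> w v" unfolding bruhat_lt_def by blast
  have part2: "bruhat_lt \<Delta> v (refl \<delta> \<circ> v)"
    if d: "\<delta> \<in> \<Delta>" "refl \<delta> \<noteq> refl \<alpha>" "bruhat_lt \<Delta> w (refl \<delta> \<circ> w)" for \<delta>
  proof -
    let ?s = "refl \<delta>"
    have dnz: "\<delta> \<noteq> 0" using nzD[OF d(1)] .
    have dR: "\<delta> \<in> R" using d(1) DsubR by auto
    have dp: "pos \<delta>" unfolding pos_def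
      by (rule exI[of _ "\<lambda>\<gamma>. if \<gamma> = \<delta> then 1 else 0"]) (use sum_delta_vec[OF d(1), of 1] in auto)
    have lsw: "coxeter_length \<Delta> w \<le> coxeter_length \<Delta> (?s \<circ> w)"
      using d(3) bruhat_le_len unfolding bruhat_lt_def by blast
    have svw: "set (?s # vs) \<subseteq> S" "word_prod (?s # vs) = ?s \<circ> v" using vs' d(1) by auto
    obtain svs where svs: "reduced_word \<Delta> svs (?s \<circ> v)" using has_red[OF svw] by blast
    have svs': "set svs \<subseteq> S" "word_prod svs = ?s \<circ> v" "length svs = coxeter_length \<Delta> (?s \<circ> v)"
      using svs unfolding reduced_word_def by auto
    have lsv: "coxeter_length \<Delta> (?s \<circ> v) \<le> coxeter_length \<Delta> v + 1"
      using len_le[OF svw(1)] svw(2) vs'(3) by simp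
    show ?thesis
    proof (cases "pos (word_prod (rev vs) \<delta>)")
      case True
      have "word_prod svs = refl \<delta> \<circ> word_prod vs" using svs'(2) vs'(2) by simp
      from KS[OF svs'(1) vs'(1) this dR dp True] obtain us where
        us: "set us \<subseteq> S" "word_prod us = v" "subseq us svs" "Suc (length us) = length svs"
        using vs'(2) by metis
      have "coxeter_length \<Delta> v \<le> length us" using len_le[OF us(1)] us(2) by simp
      then have eq: "length us = coxeter_length \<Delta> v" using us(4) svs'(3) lsv by simp
      then have "reduced_word \<Delta> us v" unfolding reduced_word_def using us by simp
      then have "bruhat_le \<Delta> v (?s \<circ> v)" unfolding bruhat_le_def using svs us(3) by blast
      moreover have "v \<noteq> ?s \<circ> v"
      proof
        assume "v = ?s \<circ> v"
        then have "coxeter_length \<Delta> v = coxeter_length \<Delta> (?s \<circ> v)" by simp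
        then show False using eq us(4) svs'(3) by simp
      qed
      ultimately show ?thesis unfolding bruhat_lt_def by blast
    next
      case False
      then have nd: "pos (- word_prod (rev vs) \<delta>)" using dichot[OF vs'(1) dR] by blast
      obtain us where us: "set us \<subseteq> S" "word_prod us = ?s \<circ> word_prod vs"
        "Suc (length us) = length vs" using KS2[OF vs'(1) dR dp nd] by blast
      define vs2 where "vs2 = ?s # us"
      have vs2: "set vs2 \<subseteq> S" "word_prod vs2 = v" "length vs2 = coxeter_length \<Delta> v"
        using us d(1) vs'(2,3) refl_refl[OF dnz] by (auto simp: vs2_def fun_eq_iff)
      have rvs2: "reduced_word \<Delta> vs2 v" unfolding reduced_word_def using vs2 by simp
      have n2: "pos (- word_prod (rev vs2) \<alpha>)" using P1[OF rvs2 v_def ws0 aR ap lenv] .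
      obtain i where i: "i < length vs2" "refl \<alpha> \<circ> word_prod vs2 = word_prod (take i vs2 @ drop (Suc i) vs2)"
        using deletion[OF vs2(1) aR ap n2] by blast
      have wdel: "w = word_prod (take i vs2 @ drop (Suc i) vs2)" using i(2) vs2(2) wv by simp
      show ?thesis
      proof (cases i)
        case 0
        then have "w = ?s \<circ> v" using wdel us(2) vs'(2) by (simp add: vs2_def)
        then have "refl \<alpha> \<circ> v = ?s \<circ> v" using wv by simp
        then have "refl \<alpha> x = ?s x" for x using vinv[of x] by (metis comp_apply)
        then have "refl \<alpha> = ?s" by (simp add: fun_eq_iff)
        then show ?thesis using d(2) by simp
      next
        case (Suc j)
        then have j: "j < length us" using i(1) by (simp add: vs2_def)
        let ?u = "take j us @ drop (Suc j) us"
        have "w = ?s \<circ> word_prod ?u" using wdel Suc by (simp add: vs2_def)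
        then have "?s \<circ> w = word_prod ?u" using refl_refl[OF dnz] by (simp add: fun_eq_iff)
        moreover have "set ?u \<subseteq> S"
          using us(1) set_take_subset[of j us] set_drop_subset[of "Suc j" us] by auto
        ultimately have "coxeter_length \<Delta> (?s \<circ> w) \<le> length ?u" using len_le by metis
        moreover have "Suc (length ?u) = length us" using j by simp
        ultimately show ?thesis using lsw us(3) vs'(3) lenv by simp
      qed
    qed
  qed
  show ?thesis using part1 part2 by (simp add: v_def)
qed

end

theorem mainTheorem12:
  fixes R \<Delta> :: "'a::euclidean_space set" and \<alpha> :: 'a and w :: "'a \<Rightarrow> 'a"
  assumes "root_system R"
    and "simple_system R \<Delta>"
    and "\<alpha> \<in> positive_roots R \<Delta>"
    and "w \<in> weyl_group R"
    and "coxeter_length \<Delta> (refl \<alpha> \<circ> w) = coxeter_length \<Delta> w + 1"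
  shows "bruhat_lt \<Delta> w (refl \<alpha> \<circ> w)
    \<and> (\<forall>\<delta>\<in>\<Delta>. refl \<delta> \<noteq> refl \<alpha> \<and> bruhat_lt \<Delta> w (refl \<delta> \<circ> w)
          \<longrightarrow> bruhat_lt \<Delta> (refl \<alpha> \<circ> w) (refl \<delta> \<circ> (refl \<alpha> \<circ> w)))"
proof -
  interpret rsys R \<Delta> using assms(1,2) by unfold_locales
  show ?thesis using main[OF assms(3,4,5)] .
qed

end
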